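(* Let $\sigma$ and $\rho$ be two Grothendieck topologies on a category $\mathcal{C}$. Suppose that for every $\rho$-covering $\{U_i\to X\}_{i\in I}$ and every choice of $\sigma$-coverings $\{V_{ij}\to U_i\}_{j\in J_i}$ ($i\in I$), there exist a $\sigma$-covering $\{U_k'\to X\}_{k\in K}$ and $\rho$-coverings $\{V_{k\ell}'\to U_k'\}_{\ell\in L_k}$ ($k\in K$) such that $\{V_{k\ell}'\to X\}_{k\in K,\ell\in L_k}$ refines $\{V_{ij}\to X\}_{i\in I, j\in J_i}$. If $F$ is a presheaf (of abelian groups) on $\mathcal{C}$ which is $\rho$-separated, then its associated $\sigma$-sheaf $a_\sigma F$ is also $\rho$-separated.
   Context: A presheaf $F$ is $\rho$-separated if for every $\rho$-covering $\{U_i\to X\}$ the map $F(X)\to\prod_i F(U_i)$ is injective. $a_\sigma$ denotes sheafification for $\sigma$. A refinement of a family $\{U_i\to X\}$ is a family $\{V_j\to X\}$ each member of which factors through some $U_{i}\to X$. *)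

theory Defs
  imports "HOL-Algebra.Group"
begin

record ('o,'m) cat =
  cobj  :: "'o set"
  carr  :: "'m set"
  cdom  :: "'m \<Rightarrow> 'o"
  ccod  :: "'m \<Rightarrow> 'o"
  ccomp :: "'m \<Rightarrow> 'm \<Rightarrow> 'm"   (* ccomp C g f = g o f, for ccod f = cdom g *)
  cid   :: "'o \<Rightarrow> 'm"

definition harr :: "('o,'m) cat \<Rightarrow> 'm \<Rightarrow> 'o \<Rightarrow> 'o \<Rightarrow> bool" where
  "harr C f X Y \<longleftrightarrow> f \<in> carr C \<and> cdom C f = X \<and> ccod C f = Y"

definition category :: "('o,'m) cat \<Rightarrow> bool" where
  "category C \<longleftrightarrow>
     (\<forall>f\<in>carr C. cdom C f \<in> cobj C \<and> ccod C f \<in> cobj C) \<and>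
     (\<forall>X\<in>cobj C. harr C (cid C X) X X) \<and>
     (\<forall>f\<in>carr C. \<forall>g\<in>carr C. ccod C f = cdom C g \<longrightarrow>
         harr C (ccomp C g f) (cdom C f) (ccod C g)) \<and>
     (\<forall>f\<in>carr C. ccomp C (cid C (ccod C f)) f = f \<and> ccomp C f (cid C (cdom C f)) = f) \<and>
     (\<forall>f\<in>carr C. \<forall>g\<in>carr C. \<forall>h\<in>carr C. ccod C f = cdom C g \<and> ccod C g = cdom C h \<longrightarrow>
         ccomp C h (ccomp C g f) = ccomp C (ccomp C h g) f)"

definition iso :: "('o,'m) cat \<Rightarrow> 'm \<Rightarrow> bool" where
  "iso C f \<longleftrightarrow> f \<in> carr C \<and> (\<exists>g. harr C g (ccod C f) (cdom C f) \<and>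
      ccomp C g f = cid C (cdom C f) \<and> ccomp C f g = cid C (ccod C f))"

definition is_pullback :: "('o,'m) cat \<Rightarrow> 'm \<Rightarrow> 'm \<Rightarrow> 'm \<Rightarrow> 'm \<Rightarrow> bool" where
  "is_pullback C f g p q \<longleftrightarrow>
     f \<in> carr C \<and> g \<in> carr C \<and> ccod C f = ccod C g \<and>
     harr C p (cdom C p) (cdom C f) \<and> harr C q (cdom C p) (cdom C g) \<and>
     ccomp C f p = ccomp C g q \<and>
     (\<forall>a b. a \<in> carr C \<and> b \<in> carr C \<and> cdom C a = cdom C b \<and>
            ccod C a = cdom C f \<and> ccod C b = cdom C g \<and> ccomp C f a = ccomp C g b \<longrightarrow>
        (\<exists>!h. harr C h (cdom C a) (cdom C p) \<and> ccomp C p h = a \<and> ccomp C q h = b))"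

section \<open>Grothendieck topologies (families of coverings, in the sense of Artin)\<close>

text \<open>A family of morphisms into X is represented by the set of its members.
  T X is the set of coverings of X.\<close>

definition comp_fam :: "('o,'m) cat \<Rightarrow> 'm set \<Rightarrow> ('m \<Rightarrow> 'm set) \<Rightarrow> 'm set" where
  "comp_fam C U V = (\<Union>u\<in>U. ccomp C u ` V u)"

definition gtop :: "('o,'m) cat \<Rightarrow> ('o \<Rightarrow> 'm set set) \<Rightarrow> bool" where
  "gtop C T \<longleftrightarrow>
     (\<forall>X. X \<notin> cobj C \<longrightarrow> T X = {}) \<and>
     (\<forall>X. \<forall>U\<in>T X. \<forall>u\<in>U. u \<in> carr C \<and> ccod C u = X) \<and>
     (\<forall>f. iso C f \<longrightarrow> {f} \<in> T (ccod C f)) \<and>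
     (\<forall>X. \<forall>U\<in>T X. \<forall>V. (\<forall>u\<in>U. V u \<in> T (cdom C u)) \<longrightarrow> comp_fam C U V \<in> T X) \<and>
     (\<forall>X. \<forall>U\<in>T X. \<forall>g. g \<in> carr C \<and> ccod C g = X \<longrightarrow>
        (\<forall>u\<in>U. \<exists>p q. is_pullback C u g p q) \<and>
        (\<forall>pb :: 'm \<Rightarrow> 'm \<times> 'm. (\<forall>u\<in>U. is_pullback C u g (fst (pb u)) (snd (pb u))) \<longrightarrow>
            (\<lambda>u. snd (pb u)) ` U \<in> T (cdom C g)))"

definition refines :: "('o,'m) cat \<Rightarrow> 'm set \<Rightarrow> 'm set \<Rightarrow> bool" where
  "refines C W U \<longleftrightarrow> (\<forall>w\<in>W. \<exists>u\<in>U. \<exists>h. h \<in> carr C \<and> ccod C h = cdom C u \<and> w = ccomp C u h)"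

text \<open>sec F X = F(X); res F f : F(ccod f) -> F(cdom f) is restriction along f.\<close>
record ('o,'m,'v) presheaf =
  sec :: "'o \<Rightarrow> 'v set"
  res :: "'m \<Rightarrow> 'v \<Rightarrow> 'v"

definition is_presheaf :: "('o,'m) cat \<Rightarrow> ('o,'m,'v) presheaf \<Rightarrow> bool" where
  "is_presheaf C F \<longleftrightarrow>
     (\<forall>f\<in>carr C. res F f ` sec F (ccod C f) \<subseteq> sec F (cdom C f)) \<and>
     (\<forall>X\<in>cobj C. \<forall>x\<in>sec F X. res F (cid C X) x = x) \<and>
     (\<forall>f\<in>carr C. \<forall>g\<in>carr C. ccod C f = cdom C g \<longrightarrow>
        (\<forall>x\<in>sec F (ccod C g). res F (ccomp C g f) x = res F f (res F g x)))"

definition is_ab_presheaf :: "('o,'m) cat \<Rightarrow> ('o,'m,'v) presheaf \<Rightarrow> ('o \<Rightarrow> 'v monoid) \<Rightarrow> bool" where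
  "is_ab_presheaf C F G \<longleftrightarrow> is_presheaf C F \<and>
     (\<forall>X\<in>cobj C. comm_group (G X) \<and> carrier (G X) = sec F X) \<and>
     (\<forall>f\<in>carr C. res F f \<in> Group.hom (G (ccod C f)) (G (cdom C f)))"

definition separated :: "('o,'m) cat \<Rightarrow> ('o \<Rightarrow> 'm set set) \<Rightarrow> ('o,'m,'v) presheaf \<Rightarrow> bool" where
  "separated C T F \<longleftrightarrow>
     (\<forall>X. \<forall>U\<in>T X. inj_on (\<lambda>x. \<lambda>u\<in>U. res F u x) (sec F X))"

definition compat :: "('o,'m) cat \<Rightarrow> ('o,'m,'v) presheaf \<Rightarrow> 'm set \<Rightarrow> ('m \<Rightarrow> 'v) \<Rightarrow> bool" where
  "compat C F U s \<longleftrightarrow> s \<in> extensional U \<and>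
     (\<forall>u\<in>U. s u \<in> sec F (cdom C u)) \<and>
     (\<forall>u1\<in>U. \<forall>u2\<in>U. \<forall>a b. a \<in> carr C \<and> b \<in> carr C \<and> cdom C a = cdom C b \<and>
         ccod C a = cdom C u1 \<and> ccod C b = cdom C u2 \<and> ccomp C u1 a = ccomp C u2 b \<longrightarrow>
         res F a (s u1) = res F b (s u2))"

definition plus_rel :: "('o,'m) cat \<Rightarrow> ('o \<Rightarrow> 'm set set) \<Rightarrow> ('o,'m,'v) presheaf \<Rightarrow> 'o
    \<Rightarrow> ('m set \<times> ('m \<Rightarrow> 'v)) \<Rightarrow> ('m set \<times> ('m \<Rightarrow> 'v)) \<Rightarrow> bool" where
  "plus_rel C T F X P Q \<longleftrightarrow>
     (\<exists>W\<in>T X. \<forall>w\<in>W. \<exists>u\<in>fst P. \<exists>v\<in>fst Q. \<exists>a b.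
        a \<in> carr C \<and> b \<in> carr C \<and> ccod C a = cdom C u \<and> ccod C b = cdom C v \<and>
        ccomp C u a = w \<and> ccomp C v b = w \<and> res F a (snd P u) = res F b (snd Q v))"

definition plus_reps :: "('o,'m) cat \<Rightarrow> ('o \<Rightarrow> 'm set set) \<Rightarrow> ('o,'m,'v) presheaf \<Rightarrow> 'o
    \<Rightarrow> ('m set \<times> ('m \<Rightarrow> 'v)) set" where
  "plus_reps C T F X = {(U, s). U \<in> T X \<and> compat C F U s}"

definition plus_class :: "('o,'m) cat \<Rightarrow> ('o \<Rightarrow> 'm set set) \<Rightarrow> ('o,'m,'v) presheaf \<Rightarrow> 'o
    \<Rightarrow> ('m set \<times> ('m \<Rightarrow> 'v)) \<Rightarrow> ('m set \<times> ('m \<Rightarrow> 'v)) set" where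
  "plus_class C T F X P = {Q \<in> plus_reps C T F X. plus_rel C T F X P Q}"

definition pull_rep :: "('o,'m) cat \<Rightarrow> ('o,'m,'v) presheaf \<Rightarrow> 'm
    \<Rightarrow> ('m set \<times> ('m \<Rightarrow> 'v)) \<Rightarrow> ('m set \<times> ('m \<Rightarrow> 'v))" where
  "pull_rep C F f P =
     (let pb = (SOME pb :: 'm \<Rightarrow> 'm \<times> 'm. \<forall>u\<in>fst P. is_pullback C u f (fst (pb u)) (snd (pb u)));
          W = (\<lambda>u. snd (pb u)) ` fst P
      in (W, \<lambda>w\<in>W. (let u = (SOME u. u \<in> fst P \<and> snd (pb u) = w) in res F (fst (pb u)) (snd P u))))"

definition plus :: "('o,'m) cat \<Rightarrow> ('o \<Rightarrow> 'm set set) \<Rightarrow> ('o,'m,'v) presheaf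
    \<Rightarrow> ('o,'m,('m set \<times> ('m \<Rightarrow> 'v)) set) presheaf" where
  "plus C T F =
     \<lparr> sec = (\<lambda>X. plus_class C T F X ` plus_reps C T F X),
       res = (\<lambda>f c. if c \<in> plus_class C T F (ccod C f) ` plus_reps C T F (ccod C f)
                    then plus_class C T F (cdom C f) (pull_rep C F f (SOME P. P \<in> c))
                    else undefined) \<rparr>"

text \<open>The associated sheaf a_T F = F^{++} (underlying presheaf of sets).\<close>
definition sheafify :: "('o,'m) cat \<Rightarrow> ('o \<Rightarrow> 'm set set) \<Rightarrow> ('o,'m,'v) presheaf
    \<Rightarrow> ('o,'m,('m set \<times> ('m \<Rightarrow> ('m set \<times> ('m \<Rightarrow> 'v)) set)) set) presheaf" where
  "sheafify C T F = plus C T (plus C T F)"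

end

theory Submission
  imports Defs
begin

locale ct =
  fixes C :: "('o,'m) cat" and T :: "'o \<Rightarrow> 'm set set"
  assumes cat: "category C" and top: "gtop C T"
begin

lemma catD1: "\<forall>f\<in>carr C. cdom C f \<in> cobj C \<and> ccod C f \<in> cobj C"
  using cat unfolding category_def by blast
lemma catD2: "\<forall>X\<in>cobj C. harr C (cid C X) X X"
  using cat unfolding category_def by blast
lemma catD3: "\<forall>f\<in>carr C. \<forall>g\<in>carr C. ccod C f = cdom C g \<longrightarrow> harr C (ccomp C g f) (cdom C f) (ccod C g)"
  using cat unfolding category_def by blast
lemma catD4: "\<forall>f\<in>carr C. ccomp C (cid C (ccod C f)) f = f \<and> ccomp C f (cid C (cdom C f)) = f"
  using cat unfolding category_def by blast
lemma catD5: "\<forall>f\<in>carr C. \<forall>g\<in>carr C. \<forall>h\<in>carr C. ccod C f = cdom C g \<and> ccod C g = cdom C h \<longrightarrow> ccomp C h (ccomp C g f) = ccomp C (ccomp C h g) f"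
  using cat unfolding category_def by blast
lemmas catD = catD1 catD2 catD3 catD4 catD5

lemma dom_obj: "f \<in> carr C \<Longrightarrow> cdom C f \<in> cobj C"
  using catD(1) by blast
lemma cod_obj: "f \<in> carr C \<Longrightarrow> ccod C f \<in> cobj C"
  using catD(1) by blast
lemma id_arr[simp]: "X \<in> cobj C \<Longrightarrow> cid C X \<in> carr C"
  using catD(2) unfolding harr_def by blast
lemma id_dom[simp]: "X \<in> cobj C \<Longrightarrow> cdom C (cid C X) = X"
  using catD(2) unfolding harr_def by blast
lemma id_cod[simp]: "X \<in> cobj C \<Longrightarrow> ccod C (cid C X) = X"
  using catD(2) unfolding harr_def by blast
lemma comp_arr[simp]: "f \<in> carr C \<Longrightarrow> g \<in> carr C \<Longrightarrow> ccod C f = cdom C g \<Longrightarrow> ccomp C g f \<in> carr C"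
  using catD(3) unfolding harr_def by blast
lemma comp_dom[simp]: "f \<in> carr C \<Longrightarrow> g \<in> carr C \<Longrightarrow> ccod C f = cdom C g \<Longrightarrow> cdom C (ccomp C g f) = cdom C f"
  using catD(3) unfolding harr_def by blast
lemma comp_cod[simp]: "f \<in> carr C \<Longrightarrow> g \<in> carr C \<Longrightarrow> ccod C f = cdom C g \<Longrightarrow> ccod C (ccomp C g f) = ccod C g"
  using catD(3) unfolding harr_def by blast
lemma id_left[simp]: "f \<in> carr C \<Longrightarrow> ccod C f = X \<Longrightarrow> ccomp C (cid C X) f = f"
  using catD(4) by blast
lemma id_right[simp]: "f \<in> carr C \<Longrightarrow> cdom C f = X \<Longrightarrow> ccomp C f (cid C X) = f"
  using catD(4) by blast
lemma assoc: "f \<in> carr C \<Longrightarrow> g \<in> carr C \<Longrightarrow> h \<in> carr C \<Longrightarrow> ccod C f = cdom C g \<Longrightarrow> ccod C g = cdom C h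
   \<Longrightarrow> ccomp C h (ccomp C g f) = ccomp C (ccomp C h g) f"
  using catD(5) by blast

lemma topD1: "\<forall>X. X \<notin> cobj C \<longrightarrow> T X = {}"
  using top unfolding gtop_def by (rule conjunct1)
lemma topD2: "\<forall>X. \<forall>U\<in>T X. \<forall>u\<in>U. u \<in> carr C \<and> ccod C u = X"
  using top unfolding gtop_def by (rule conjunct1[OF conjunct2])
lemma topD3: "\<forall>f. iso C f \<longrightarrow> {f} \<in> T (ccod C f)"
  using top unfolding gtop_def by (rule conjunct1[OF conjunct2[OF conjunct2]])
lemma topD4: "\<forall>X. \<forall>U\<in>T X. \<forall>V. (\<forall>u\<in>U. V u \<in> T (cdom C u)) \<longrightarrow> comp_fam C U V \<in> T X"
  using top unfolding gtop_def by (rule conjunct1[OF conjunct2[OF conjunct2[OF conjunct2]]])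
lemma topD5: "\<forall>X. \<forall>U\<in>T X. \<forall>g. g \<in> carr C \<and> ccod C g = X \<longrightarrow> (\<forall>u\<in>U. \<exists>p q. is_pullback C u g p q) \<and> (\<forall>pb :: 'm \<Rightarrow> 'm \<times> 'm. (\<forall>u\<in>U. is_pullback C u g (fst (pb u)) (snd (pb u))) \<longrightarrow> (\<lambda>u. snd (pb u)) ` U \<in> T (cdom C g))"
  using top unfolding gtop_def by (rule conjunct2[OF conjunct2[OF conjunct2[OF conjunct2]]])
lemmas topD = topD1 topD2 topD3 topD4 topD5

lemma cov_arr: "U \<in> T X \<Longrightarrow> u \<in> U \<Longrightarrow> u \<in> carr C"
  using topD(2) by blast
lemma cov_cod: "U \<in> T X \<Longrightarrow> u \<in> U \<Longrightarrow> ccod C u = X"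
  using topD(2) by blast
lemma cov_obj: "U \<in> T X \<Longrightarrow> X \<in> cobj C"
  using topD(1) by blast
lemma cov_id: "X \<in> cobj C \<Longrightarrow> {cid C X} \<in> T X"
proof -
  assume X: "X \<in> cobj C"
  have "harr C (cid C X) (ccod C (cid C X)) (cdom C (cid C X))" unfolding harr_def using X by simp
  moreover have "ccomp C (cid C X) (cid C X) = cid C (cdom C (cid C X))" using X by simp
  moreover have "ccomp C (cid C X) (cid C X) = cid C (ccod C (cid C X))" using X by simp
  ultimately have "iso C (cid C X)" unfolding iso_def using X id_arr by blast
  then have "{cid C X} \<in> T (ccod C (cid C X))" using topD(3) by blast
  then show ?thesis using X by simp
qed
lemma comp_fam_iff: "w \<in> comp_fam C U V \<longleftrightarrow> (\<exists>u\<in>U. \<exists>v\<in>V u. w = ccomp C u v)"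
  unfolding comp_fam_def by blast
lemma cov_comp: "U \<in> T X \<Longrightarrow> (\<And>u. u \<in> U \<Longrightarrow> V u \<in> T (cdom C u)) \<Longrightarrow> comp_fam C U V \<in> T X"
  using topD(4) by blast

lemma pb_facts:
  assumes "is_pullback C u g p q"
  shows "p \<in> carr C" "q \<in> carr C" "ccod C p = cdom C u" "ccod C q = cdom C g" "cdom C q = cdom C p"
        "ccomp C u p = ccomp C g q" "u \<in> carr C" "g \<in> carr C" "ccod C u = ccod C g"
  using assms unfolding is_pullback_def harr_def by auto

lemma cov_pull:
  assumes U: "U \<in> T X" and g: "g \<in> carr C" "ccod C g = X"
  shows "\<exists>pb. (\<forall>u\<in>U. is_pullback C u g (fst (pb u)) (snd (pb u))) \<and> (\<lambda>u. snd (pb u)) ` U \<in> T (cdom C g)"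
proof -
  have "\<forall>u\<in>U. \<exists>p q. is_pullback C u g p q" using topD(5) U g by blast
  then have "\<forall>u\<in>U. \<exists>pq. is_pullback C u g (fst pq) (snd pq)" by auto
  then obtain pb where pb: "\<forall>u\<in>U. is_pullback C u g (fst (pb u)) (snd (pb u))" by metis
  moreover have "(\<lambda>u. snd (pb u)) ` U \<in> T (cdom C g)"
    using topD(5) U g pb by blast
  ultimately show ?thesis by blast
qed

lemma ps_sec: "is_presheaf C H \<Longrightarrow> f \<in> carr C \<Longrightarrow> x \<in> sec H (ccod C f) \<Longrightarrow> res H f x \<in> sec H (cdom C f)"
  unfolding is_presheaf_def by blast
lemma ps_id: "is_presheaf C H \<Longrightarrow> X \<in> cobj C \<Longrightarrow> x \<in> sec H X \<Longrightarrow> res H (cid C X) x = x"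
  unfolding is_presheaf_def by blast
lemma ps_comp: "is_presheaf C H \<Longrightarrow> f \<in> carr C \<Longrightarrow> g \<in> carr C \<Longrightarrow> ccod C f = cdom C g \<Longrightarrow> x \<in> sec H (ccod C g)
   \<Longrightarrow> res H (ccomp C g f) x = res H f (res H g x)"
  unfolding is_presheaf_def by blast

definition D where
  "D H f P g Q \<longleftrightarrow> (\<exists>p\<in>fst P. \<exists>q\<in>fst Q. \<exists>a b. a \<in> carr C \<and> b \<in> carr C \<and>
      ccod C a = cdom C p \<and> ccod C b = cdom C q \<and> ccomp C p a = f \<and> ccomp C q b = g \<and>
      res H a (snd P p) = res H b (snd Q q))"

definition Rl where
  "Rl H Y f P g Q \<longleftrightarrow> (\<exists>Z\<in>T Y. \<forall>z\<in>Z. D H (ccomp C f z) P (ccomp C g z) Q)"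

definition good where
  "good H P \<longleftrightarrow> (\<forall>p\<in>fst P. p \<in> carr C) \<and> compat C H (fst P) (snd P)"

lemma D_sym: "D H f P g Q \<Longrightarrow> D H g Q f P"
  unfolding D_def by metis
lemma Rl_sym: "Rl H Y f P g Q \<Longrightarrow> Rl H Y g Q f P"
  unfolding Rl_def using D_sym by metis

lemma good_sec: "good H P \<Longrightarrow> p \<in> fst P \<Longrightarrow> snd P p \<in> sec H (cdom C p)"
  unfolding good_def compat_def by blast

lemma D_restrict:
  assumes H: "is_presheaf C H" and gP: "good H P" and gQ: "good H Q" and d: "D H f P g Q"
    and m: "m \<in> carr C" "ccod C m = cdom C f" and fg: "cdom C g = cdom C f"
  shows "D H (ccomp C f m) P (ccomp C g m) Q"
proof -
  obtain p q a b where pq: "p \<in> fst P" "q \<in> fst Q" "a \<in> carr C" "b \<in> carr C"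
    "ccod C a = cdom C p" "ccod C b = cdom C q" "ccomp C p a = f" "ccomp C q b = g"
    "res H a (snd P p) = res H b (snd Q q)"
    using d unfolding D_def by blast
  have p: "p \<in> carr C" and q: "q \<in> carr C" using gP gQ pq unfolding good_def by auto
  have da: "cdom C a = cdom C f" using pq p by (metis comp_dom)
  have db: "cdom C b = cdom C f" using pq q fg by (metis comp_dom)
  have 1: "ccomp C p (ccomp C a m) = ccomp C f m" using assoc[of m a p] pq p m da by simp
  have 2: "ccomp C q (ccomp C b m) = ccomp C g m" using assoc[of m b q] pq q m db by simp
  have 3: "res H (ccomp C a m) (snd P p) = res H (ccomp C b m) (snd Q q)"
    using ps_comp[OF H, of m a "snd P p"] ps_comp[OF H, of m b "snd Q q"] pq m da db
      good_sec[OF gP pq(1)] good_sec[OF gQ pq(2)] by simp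
  show ?thesis unfolding D_def
    apply (rule bexI[OF _ pq(1)], rule bexI[OF _ pq(2)])
    apply (rule exI[of _ "ccomp C a m"], rule exI[of _ "ccomp C b m"])
    using 1 2 3 pq m da db p q by simp
qed

lemma D_trans:
  assumes gQ: "good H Q" and d1: "D H f P g Q" and d2: "D H g Q h S"
  shows "D H f P h S"
proof -
  obtain p q1 a1 b1 where A: "p \<in> fst P" "q1 \<in> fst Q" "a1 \<in> carr C" "b1 \<in> carr C"
    "ccod C a1 = cdom C p" "ccod C b1 = cdom C q1" "ccomp C p a1 = f" "ccomp C q1 b1 = g"
    "res H a1 (snd P p) = res H b1 (snd Q q1)"
    using d1 unfolding D_def by blast
  obtain q2 s a2 b2 where B: "q2 \<in> fst Q" "s \<in> fst S" "a2 \<in> carr C" "b2 \<in> carr C"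
    "ccod C a2 = cdom C q2" "ccod C b2 = cdom C s" "ccomp C q2 a2 = g" "ccomp C s b2 = h"
    "res H a2 (snd Q q2) = res H b2 (snd S s)"
    using d2 unfolding D_def by blast
  have q: "q1 \<in> carr C" "q2 \<in> carr C" using gQ A B unfolding good_def by auto
  have "cdom C b1 = cdom C a2" using A B q by (metis comp_dom)
  then have "res H b1 (snd Q q1) = res H a2 (snd Q q2)"
    using gQ A B unfolding good_def compat_def by metis
  then show ?thesis unfolding D_def using A B by metis
qed

lemma Rl_restrict:
  assumes H: "is_presheaf C H" and gP: "good H P" and gQ: "good H Q" and r: "Rl H Y f P g Q"
    and fg: "f \<in> carr C" "g \<in> carr C" "cdom C f = Y" "cdom C g = Y"
    and m: "m \<in> carr C" "ccod C m = Y"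
  shows "Rl H (cdom C m) (ccomp C f m) P (ccomp C g m) Q"
proof -
  obtain Z where Z: "Z \<in> T Y" and dz: "\<And>z. z \<in> Z \<Longrightarrow> D H (ccomp C f z) P (ccomp C g z) Q"
    using r unfolding Rl_def by blast
  obtain pb where pb: "\<forall>z\<in>Z. is_pullback C z m (fst (pb z)) (snd (pb z))"
    and Z': "(\<lambda>z. snd (pb z)) ` Z \<in> T (cdom C m)"
    using cov_pull[OF Z m] by blast
  show ?thesis unfolding Rl_def
  proof (rule bexI[OF _ Z'], clarsimp)
    fix z assume z: "z \<in> Z"
    let ?p = "fst (pb z)" and ?q = "snd (pb z)"
    have P: "is_pullback C z m ?p ?q" using pb z by blast
    note pf = pb_facts[OF P]
    have zc: "z \<in> carr C" "ccod C z = Y" using cov_arr[OF Z z] cov_cod[OF Z z] by auto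
    have "D H (ccomp C (ccomp C f z) ?p) P (ccomp C (ccomp C g z) ?p) Q"
      apply (rule D_restrict[OF H gP gQ dz[OF z]])
      using pf zc fg by auto
    moreover have "ccomp C (ccomp C f z) ?p = ccomp C (ccomp C f m) ?q"
      using assoc[of ?p z f] assoc[of ?q m f] pf zc fg m by simp
    moreover have "ccomp C (ccomp C g z) ?p = ccomp C (ccomp C g m) ?q"
      using assoc[of ?p z g] assoc[of ?q m g] pf zc fg m by simp
    ultimately show "D H (ccomp C (ccomp C f m) ?q) P (ccomp C (ccomp C g m) ?q) Q" by simp
  qed
qed

lemma Rl_local:
  assumes Z: "Z \<in> T Y" and fg: "f \<in> carr C" "g \<in> carr C" "cdom C f = Y" "cdom C g = Y"
    and loc: "\<And>z. z \<in> Z \<Longrightarrow> Rl H (cdom C z) (ccomp C f z) P (ccomp C g z) Q"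
  shows "Rl H Y f P g Q"
proof -
  have "\<forall>z\<in>Z. \<exists>W\<in>T (cdom C z). \<forall>w\<in>W. D H (ccomp C (ccomp C f z) w) P (ccomp C (ccomp C g z) w) Q"
    using loc unfolding Rl_def by blast
  then obtain V where V: "\<And>z. z \<in> Z \<Longrightarrow> V z \<in> T (cdom C z)"
    and dv: "\<And>z w. z \<in> Z \<Longrightarrow> w \<in> V z \<Longrightarrow> D H (ccomp C (ccomp C f z) w) P (ccomp C (ccomp C g z) w) Q"
    by metis
  show ?thesis unfolding Rl_def
  proof (rule bexI[OF _ cov_comp[OF Z V]])
    show "\<forall>e\<in>comp_fam C Z V. D H (ccomp C f e) P (ccomp C g e) Q"
    proof
      fix e assume "e \<in> comp_fam C Z V"
      then obtain z w where zw: "z \<in> Z" "w \<in> V z" "e = ccomp C z w" unfolding comp_fam_iff by blast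
      have zc: "z \<in> carr C" "ccod C z = Y" using cov_arr[OF Z zw(1)] cov_cod[OF Z zw(1)] by auto
      have wc: "w \<in> carr C" "ccod C w = cdom C z" using cov_arr[OF V zw(2)] cov_cod[OF V zw(2)] zw by auto
      show "D H (ccomp C f e) P (ccomp C g e) Q"
        using dv[OF zw(1,2)] assoc[of w z f] assoc[of w z g] zc wc fg zw(3) by simp
    qed
  qed
qed

lemma Rl_trans:
  assumes H: "is_presheaf C H" and g: "good H P" "good H Q" "good H S"
    and fgh: "f \<in> carr C" "g \<in> carr C" "h \<in> carr C" "cdom C f = Y" "cdom C g = Y" "cdom C h = Y"
    and r1: "Rl H Y f P g Q" and r2: "Rl H Y g Q h S"
  shows "Rl H Y f P h S"
proof -
  obtain Z where Z: "Z \<in> T Y" and dz: "\<And>z. z \<in> Z \<Longrightarrow> D H (ccomp C f z) P (ccomp C g z) Q"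
    using r1 unfolding Rl_def by blast
  show ?thesis
  proof (rule Rl_local[OF Z fgh(1,3,4,6)])
    fix z assume z: "z \<in> Z"
    have zc: "z \<in> carr C" "ccod C z = Y" using cov_arr[OF Z z] cov_cod[OF Z z] by auto
    have "Rl H (cdom C z) (ccomp C g z) Q (ccomp C h z) S"
      by (rule Rl_restrict[OF H g(2,3) r2 fgh(2,3,5,6) zc])
    then obtain W where W: "W \<in> T (cdom C z)"
      and dw: "\<And>w. w \<in> W \<Longrightarrow> D H (ccomp C (ccomp C g z) w) Q (ccomp C (ccomp C h z) w) S"
      unfolding Rl_def by blast
    show "Rl H (cdom C z) (ccomp C f z) P (ccomp C h z) S" unfolding Rl_def
    proof (rule bexI[OF _ W], rule ballI)
      fix w assume w: "w \<in> W"
      have wc: "w \<in> carr C" "ccod C w = cdom C z" using cov_arr[OF W w] cov_cod[OF W w] by auto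
      have "D H (ccomp C (ccomp C f z) w) P (ccomp C (ccomp C g z) w) Q"
        apply (rule D_restrict[OF H g(1,2) dz[OF z]]) using wc zc fgh by auto
      then show "D H (ccomp C (ccomp C f z) w) P (ccomp C (ccomp C h z) w) S"
        using D_trans[OF g(2) _ dw[OF w]] by blast
    qed
  qed
qed

end

context ct
begin

lemma topD5':
  assumes "U \<in> T X" "g \<in> carr C" "ccod C g = X"
  shows "(\<forall>u\<in>U. \<exists>p q. is_pullback C u g p q) \<and>
        (\<forall>pb :: 'm \<Rightarrow> 'm \<times> 'm. (\<forall>u\<in>U. is_pullback C u g (fst (pb u)) (snd (pb u))) \<longrightarrow>
            (\<lambda>u. snd (pb u)) ` U \<in> T (cdom C g))"
proof -
  have "\<forall>g. g \<in> carr C \<and> ccod C g = X \<longrightarrow>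
        (\<forall>u\<in>U. \<exists>p q. is_pullback C u g p q) \<and>
        (\<forall>pb :: 'm \<Rightarrow> 'm \<times> 'm. (\<forall>u\<in>U. is_pullback C u g (fst (pb u)) (snd (pb u))) \<longrightarrow>
            (\<lambda>u. snd (pb u)) ` U \<in> T (cdom C g))"
    by (rule bspec[OF spec[OF topD(5), of X] assms(1)])
  from mp[OF spec[OF this, of g] conjI[OF assms(2,3)]] show ?thesis .
qed

lemma cov_pull2:
  assumes "U \<in> T X" "g \<in> carr C" "ccod C g = X"
    and "\<forall>u\<in>U. is_pullback C u g (fst (pb u)) (snd (pb u))"
  shows "(\<lambda>u. snd (pb u)) ` U \<in> T (cdom C g)"
  using mp[OF spec[OF conjunct2[OF topD5'[OF assms(1-3)]], of pb] assms(4)] .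

lemma reps_iff: "P \<in> plus_reps C T H X \<longleftrightarrow> fst P \<in> T X \<and> compat C H (fst P) (snd P)"
  unfolding plus_reps_def by (cases P) auto

lemma reps_good: "P \<in> plus_reps C T H X \<Longrightarrow> good H P"
  unfolding reps_iff good_def using cov_arr by blast

lemma reps_obj: "P \<in> plus_reps C T H X \<Longrightarrow> X \<in> cobj C"
  unfolding reps_iff using cov_obj by blast

lemma rel_D: "plus_rel C T H X P Q \<longleftrightarrow> (\<exists>W\<in>T X. \<forall>w\<in>W. D H w P w Q)"
  unfolding plus_rel_def D_def by simp

lemma rel_Rl: "plus_rel C T H X P Q \<longleftrightarrow> Rl H X (cid C X) P (cid C X) Q"
proof -
  have eq: "\<And>W w. W \<in> T X \<Longrightarrow> w \<in> W \<Longrightarrow> ccomp C (cid C X) w = w"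
    using cov_arr cov_cod by simp
  show ?thesis unfolding rel_D Rl_def
  proof
    assume "\<exists>W\<in>T X. \<forall>w\<in>W. D H w P w Q"
    then obtain W where "W \<in> T X" "\<forall>w\<in>W. D H w P w Q" by blast
    then show "\<exists>Z\<in>T X. \<forall>z\<in>Z. D H (ccomp C (cid C X) z) P (ccomp C (cid C X) z) Q" using eq by auto
  next
    assume "\<exists>Z\<in>T X. \<forall>z\<in>Z. D H (ccomp C (cid C X) z) P (ccomp C (cid C X) z) Q"
    then obtain W where "W \<in> T X" "\<forall>w\<in>W. D H (ccomp C (cid C X) w) P (ccomp C (cid C X) w) Q" by blast
    then show "\<exists>W\<in>T X. \<forall>w\<in>W. D H w P w Q" using eq by auto
  qed
qed

lemma rel_refl: assumes P: "P \<in> plus_reps C T H X" shows "plus_rel C T H X P P"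
proof -
  have F: "fst P \<in> T X" using P unfolding reps_iff by blast
  have "\<forall>p\<in>fst P. D H p P p P"
  proof
    fix p assume p: "p \<in> fst P"
    have pc: "p \<in> carr C" using cov_arr[OF F p] .
    show "D H p P p P" unfolding D_def
      apply (rule bexI[OF _ p], rule bexI[OF _ p])
      apply (rule exI[of _ "cid C (cdom C p)"], rule exI[of _ "cid C (cdom C p)"])
      using pc dom_obj[OF pc] by simp
  qed
  then show ?thesis unfolding rel_D using F by blast
qed

lemma rel_sym: assumes "plus_rel C T H X P Q" shows "plus_rel C T H X Q P"
proof -
  obtain W where W: "W \<in> T X" "\<And>w. w \<in> W \<Longrightarrow> D H w P w Q" using assms unfolding rel_D by blast
  have "\<forall>w\<in>W. D H w Q w P" using W(2) D_sym by blast
  then show ?thesis unfolding rel_D using W(1) by blast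
qed

lemma rel_trans:
  assumes H: "is_presheaf C H" and P: "P \<in> plus_reps C T H X" and Q: "Q \<in> plus_reps C T H X"
    and S: "S \<in> plus_reps C T H X"
    and r1: "plus_rel C T H X P Q" and r2: "plus_rel C T H X Q S"
  shows "plus_rel C T H X P S"
proof -
  have X: "X \<in> cobj C" using reps_obj[OF P] .
  show ?thesis using r1 r2 unfolding rel_Rl
    using Rl_trans[OF H reps_good[OF P] reps_good[OF Q] reps_good[OF S], of "cid C X" "cid C X" "cid C X" X] X by simp
qed

lemma mem_cls: "P \<in> plus_reps C T H X \<Longrightarrow> P \<in> plus_class C T H X P"
  unfolding plus_class_def using rel_refl by blast

lemma cls_eq:
  assumes H: "is_presheaf C H" and P: "P \<in> plus_reps C T H X" and Q: "Q \<in> plus_reps C T H X"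
  shows "plus_class C T H X P = plus_class C T H X Q \<longleftrightarrow> plus_rel C T H X P Q"
proof
  assume "plus_class C T H X P = plus_class C T H X Q"
  then have "Q \<in> plus_class C T H X P" using mem_cls[OF Q] by simp
  then show "plus_rel C T H X P Q" unfolding plus_class_def by blast
next
  assume r: "plus_rel C T H X P Q"
  have "\<And>S. S \<in> plus_reps C T H X \<Longrightarrow> plus_rel C T H X P S \<longleftrightarrow> plus_rel C T H X Q S"
  proof -
    fix S assume S: "S \<in> plus_reps C T H X"
    show "plus_rel C T H X P S \<longleftrightarrow> plus_rel C T H X Q S"
    proof
      assume "plus_rel C T H X P S" then show "plus_rel C T H X Q S"
        using rel_trans[OF H Q P S] rel_sym[OF r] by simp
    next
      assume "plus_rel C T H X Q S" then show "plus_rel C T H X P S"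
        using rel_trans[OF H P Q S] r by simp
    qed
  qed
  then show "plus_class C T H X P = plus_class C T H X Q" unfolding plus_class_def by auto
qed

end

context ct
begin

lemma sec_plus: "sec (plus C T H) X = plus_class C T H X ` plus_reps C T H X"
  by (simp add: plus_def)

lemma res_plus: "res (plus C T H) f c = (if c \<in> plus_class C T H (ccod C f) ` plus_reps C T H (ccod C f)
                    then plus_class C T H (cdom C f) (pull_rep C H f (SOME P. P \<in> c)) else undefined)"
  by (simp add: plus_def)

lemma pull:
  assumes H: "is_presheaf C H" and P: "P \<in> plus_reps C T H (ccod C f)" and f: "f \<in> carr C"
  shows "pull_rep C H f P \<in> plus_reps C T H (cdom C f) \<and>
         Rl H (cdom C f) f P (cid C (cdom C f)) (pull_rep C H f P)"
proof -
  obtain U s where Ps: "P = (U, s)" by (cases P)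
  have U: "U \<in> T (ccod C f)" and cs: "compat C H U s" using P unfolding reps_iff Ps by auto
  define pb where "pb = (SOME pb :: 'm \<Rightarrow> 'm \<times> 'm. \<forall>u\<in>U. is_pullback C u f (fst (pb u)) (snd (pb u)))"
  have ex: "\<exists>pb :: 'm \<Rightarrow> 'm \<times> 'm. \<forall>u\<in>U. is_pullback C u f (fst (pb u)) (snd (pb u))"
    using cov_pull[OF U f refl] by blast
  have pbp: "\<forall>u\<in>U. is_pullback C u f (fst (pb u)) (snd (pb u))"
    using someI_ex[OF ex] unfolding pb_def .
  define W where "W = (\<lambda>u. snd (pb u)) ` U"
  have W: "W \<in> T (cdom C f)" unfolding W_def by (rule cov_pull2[OF U f refl pbp])
  define uu where "uu = (\<lambda>w. SOME u. u \<in> U \<and> snd (pb u) = w)"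
  define t where "t = (\<lambda>w\<in>W. res H (fst (pb (uu w))) (s (uu w)))"
  have pr: "pull_rep C H f P = (W, t)"
    unfolding pull_rep_def Ps by (simp add: Let_def pb_def W_def t_def uu_def)
  have uu: "\<And>w. w \<in> W \<Longrightarrow> uu w \<in> U \<and> snd (pb (uu w)) = w"
  proof -
    fix w assume "w \<in> W"
    then have "\<exists>u. u \<in> U \<and> snd (pb u) = w" unfolding W_def by blast
    then show "uu w \<in> U \<and> snd (pb (uu w)) = w" unfolding uu_def by (rule someI_ex)
  qed
  have ssec: "\<And>u. u \<in> U \<Longrightarrow> s u \<in> sec H (cdom C u)" using cs unfolding compat_def by blast
  have wc: "\<And>w. w \<in> W \<Longrightarrow> w \<in> carr C \<and> ccod C w = cdom C f" using cov_arr[OF W] cov_cod[OF W] by blast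
  have tsec: "\<And>w. w \<in> W \<Longrightarrow> t w \<in> sec H (cdom C w)"
  proof -
    fix w assume w: "w \<in> W"
    let ?u = "uu w"
    have u: "?u \<in> U" and q: "snd (pb ?u) = w" using uu[OF w] by auto
    note pf = pb_facts[OF pbp[rule_format, OF u]]
    have "res H (fst (pb ?u)) (s ?u) \<in> sec H (cdom C (fst (pb ?u)))"
      using ps_sec[OF H pf(1)] ssec[OF u] pf by simp
    then show "t w \<in> sec H (cdom C w)" using w q pf unfolding t_def by simp
  qed
  have compat: "compat C H W t"
    unfolding compat_def
  proof (intro conjI ballI allI impI)
    show "t \<in> extensional W" unfolding t_def by simp
  next
    fix w assume "w \<in> W" then show "t w \<in> sec H (cdom C w)" by (rule tsec)
  next
    fix w1 w2 a b assume w1: "w1 \<in> W" and w2: "w2 \<in> W"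
      and ab: "a \<in> carr C \<and> b \<in> carr C \<and> cdom C a = cdom C b \<and> ccod C a = cdom C w1 \<and>
               ccod C b = cdom C w2 \<and> ccomp C w1 a = ccomp C w2 b"
    let ?u1 = "uu w1" and ?u2 = "uu w2"
    have u1: "?u1 \<in> U" "snd (pb ?u1) = w1" and u2: "?u2 \<in> U" "snd (pb ?u2) = w2" using uu w1 w2 by auto
    let ?p1 = "fst (pb ?u1)" and ?p2 = "fst (pb ?u2)"
    note f1 = pb_facts[OF pbp[rule_format, OF u1(1)]]
    note f2 = pb_facts[OF pbp[rule_format, OF u2(1)]]
    have uc: "?u1 \<in> carr C" "ccod C ?u1 = ccod C f" "?u2 \<in> carr C" "ccod C ?u2 = ccod C f"
      using cov_arr[OF U u1(1)] cov_cod[OF U u1(1)] cov_arr[OF U u2(1)] cov_cod[OF U u2(1)] by auto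
    have w1c: "w1 \<in> carr C" "ccod C w1 = cdom C f" and w2c: "w2 \<in> carr C" "ccod C w2 = cdom C f"
      using wc w1 w2 by auto
    have e1: "res H a (t w1) = res H (ccomp C ?p1 a) (s ?u1)"
      using w1 ps_comp[OF H, of a ?p1 "s ?u1"] ab f1 u1 ssec[OF u1(1)] unfolding t_def by simp
    have e2: "res H b (t w2) = res H (ccomp C ?p2 b) (s ?u2)"
      using w2 ps_comp[OF H, of b ?p2 "s ?u2"] ab f2 u2 ssec[OF u2(1)] unfolding t_def by simp
    have c1: "ccomp C ?u1 (ccomp C ?p1 a) = ccomp C f (ccomp C w1 a)"
      using assoc[of a ?p1 ?u1] assoc[of a w1 f] f1 u1 ab uc w1c f by simp
    have c2: "ccomp C ?u2 (ccomp C ?p2 b) = ccomp C f (ccomp C w2 b)"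
      using assoc[of b ?p2 ?u2] assoc[of b w2 f] f2 u2 ab uc w2c f by simp
    have "res H (ccomp C ?p1 a) (s ?u1) = res H (ccomp C ?p2 b) (s ?u2)"
      using cs[unfolded compat_def] u1(1) u2(1) ab f1 f2 u1 u2 c1 c2 by simp
    then show "res H a (t w1) = res H b (t w2)" using e1 e2 by simp
  qed
  have rl: "Rl H (cdom C f) f P (cid C (cdom C f)) (W, t)"
    unfolding Rl_def
  proof (rule bexI[OF _ W], rule ballI)
    fix w assume w: "w \<in> W"
    let ?u = "uu w"
    have u: "?u \<in> U" "snd (pb ?u) = w" using uu w by auto
    note pf = pb_facts[OF pbp[rule_format, OF u(1)]]
    have wcc: "w \<in> carr C" "ccod C w = cdom C f" using wc w by auto
    have dw: "cdom C w \<in> cobj C" using dom_obj wcc by blast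
    have tw: "t w = res H (fst (pb ?u)) (s ?u)" using w unfolding t_def by simp
    have "D H (ccomp C f w) P w (W, t)" unfolding D_def Ps fst_conv snd_conv
      apply (rule bexI[OF _ u(1)], rule bexI[OF _ w])
      apply (rule exI[of _ "fst (pb ?u)"], rule exI[of _ "cid C (cdom C w)"])
      using pf u wcc dw tw ps_id[OF H dw tsec[OF w]] by simp
    then show "D H (ccomp C f w) P (ccomp C (cid C (cdom C f)) w) (W, t)" using wcc by simp
  qed
  show ?thesis using pr compat W rl unfolding reps_iff by simp
qed

end

context ct
begin

lemma char:
  assumes H: "is_presheaf C H" and f: "f \<in> carr C"
    and P: "P \<in> plus_reps C T H (ccod C f)" and Q: "Q \<in> plus_reps C T H (cdom C f)"
    and r: "Rl H (cdom C f) f P (cid C (cdom C f)) Q"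
  shows "res (plus C T H) f (plus_class C T H (ccod C f) P) = plus_class C T H (cdom C f) Q"
proof -
  let ?X = "ccod C f" and ?Y = "cdom C f"
  let ?c = "plus_class C T H ?X P"
  have c: "?c \<in> plus_class C T H ?X ` plus_reps C T H ?X" using P by blast
  define P' where "P' = (SOME P'. P' \<in> ?c)"
  have "P \<in> ?c" by (rule mem_cls[OF P])
  then have "P' \<in> ?c" unfolding P'_def by (rule someI)
  then have P': "P' \<in> plus_reps C T H ?X" and rPP': "plus_rel C T H ?X P P'"
    unfolding plus_class_def by auto
  have rs: "res (plus C T H) f ?c = plus_class C T H ?Y (pull_rep C H f P')"
    unfolding res_plus P'_def using c by simp
  define A where "A = pull_rep C H f P'"
  have A: "A \<in> plus_reps C T H ?Y" and rA: "Rl H ?Y f P' (cid C ?Y) A"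
    using pull[OF H P' f] unfolding A_def by auto
  have X: "?X \<in> cobj C" and Y: "?Y \<in> cobj C" using cod_obj dom_obj f by auto
  have "Rl H ?X (cid C ?X) P (cid C ?X) P'" using rPP' unfolding rel_Rl .
  from Rl_restrict[OF H reps_good[OF P] reps_good[OF P'] this _ _ _ _ f refl]
  have r2: "Rl H ?Y f P f P'" using X f by simp
  have gP: "good H P" and gP': "good H P'" and gQ: "good H Q" and gA: "good H A"
    using reps_good[OF P] reps_good[OF P'] reps_good[OF Q] reps_good[OF A] by auto
  have r1: "Rl H ?Y (cid C ?Y) Q f P" using Rl_sym[OF r] .
  have "Rl H ?Y (cid C ?Y) Q f P'"
    using Rl_trans[OF H gQ gP gP' _ _ _ _ _ _ r1 r2] f Y by simp
  then have "Rl H ?Y (cid C ?Y) Q (cid C ?Y) A"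
    using Rl_trans[OF H gQ gP' gA _ _ _ _ _ _ _ rA] f Y by simp
  then have "plus_rel C T H ?Y Q A" unfolding rel_Rl .
  then have "plus_class C T H ?Y Q = plus_class C T H ?Y A" using cls_eq[OF H Q A] by simp
  then show ?thesis using rs unfolding A_def by simp
qed

lemma res_cls:
  assumes H: "is_presheaf C H" and f: "f \<in> carr C" and P: "P \<in> plus_reps C T H (ccod C f)"
  shows "res (plus C T H) f (plus_class C T H (ccod C f) P) = plus_class C T H (cdom C f) (pull_rep C H f P)"
  using char[OF H f P] pull[OF H P f] by simp

lemma plus_presheaf:
  assumes H: "is_presheaf C H"
  shows "is_presheaf C (plus C T H)"
  unfolding is_presheaf_def
proof (intro conjI ballI impI)
  fix f assume f: "f \<in> carr C"
  show "res (plus C T H) f ` sec (plus C T H) (ccod C f) \<subseteq> sec (plus C T H) (cdom C f)"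
  proof
    fix d assume "d \<in> res (plus C T H) f ` sec (plus C T H) (ccod C f)"
    then obtain P where P: "P \<in> plus_reps C T H (ccod C f)"
      and d: "d = res (plus C T H) f (plus_class C T H (ccod C f) P)"
      unfolding sec_plus by blast
    have "pull_rep C H f P \<in> plus_reps C T H (cdom C f)" using pull[OF H P f] by blast
    then show "d \<in> sec (plus C T H) (cdom C f)" unfolding d res_cls[OF H f P] sec_plus by blast
  qed
next
  fix X c assume X: "X \<in> cobj C" and c: "c \<in> sec (plus C T H) X"
  then obtain P where P: "P \<in> plus_reps C T H X" and cP: "c = plus_class C T H X P"
    unfolding sec_plus by blast
  have "Rl H X (cid C X) P (cid C X) P" using rel_refl[OF P] unfolding rel_Rl .
  then show "res (plus C T H) (cid C X) c = c"
    using char[OF H id_arr[OF X], of P P] X P cP by simp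
next
  fix f g c assume f: "f \<in> carr C" and g: "g \<in> carr C" and fg: "ccod C f = cdom C g"
    and c: "c \<in> sec (plus C T H) (ccod C g)"
  then obtain P where P: "P \<in> plus_reps C T H (ccod C g)" and cP: "c = plus_class C T H (ccod C g) P"
    unfolding sec_plus by blast
  define A where "A = pull_rep C H g P"
  have A: "A \<in> plus_reps C T H (cdom C g)" and rA: "Rl H (cdom C g) g P (cid C (cdom C g)) A"
    using pull[OF H P g] unfolding A_def by auto
  define B where "B = pull_rep C H f A"
  have A': "A \<in> plus_reps C T H (ccod C f)" using A fg by simp
  have B: "B \<in> plus_reps C T H (cdom C f)" and rB: "Rl H (cdom C f) f A (cid C (cdom C f)) B"
    using pull[OF H A' f] unfolding B_def by auto
  have e1: "res (plus C T H) g c = plus_class C T H (ccod C f) A"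
    using res_cls[OF H g P] cP fg unfolding A_def by simp
  have e2: "res (plus C T H) f (plus_class C T H (ccod C f) A) = plus_class C T H (cdom C f) B"
    using res_cls[OF H f A'] unfolding B_def by simp
  have Yo: "cdom C g \<in> cobj C" "cdom C f \<in> cobj C" using dom_obj f g by auto
  have "Rl H (cdom C f) (ccomp C g f) P (ccomp C (cid C (cdom C g)) f) A"
    using Rl_restrict[OF H reps_good[OF P] reps_good[OF A] rA _ _ _ _ f] g Yo fg by simp
  then have r1: "Rl H (cdom C f) (ccomp C g f) P f A" using f fg by simp
  have r: "Rl H (cdom C f) (ccomp C g f) P (cid C (cdom C f)) B"
    using Rl_trans[OF H reps_good[OF P] reps_good[OF A] reps_good[OF B] _ _ _ _ _ _ r1 rB] f g fg Yo by simp
  have gf: "ccomp C g f \<in> carr C" "ccod C (ccomp C g f) = ccod C g" "cdom C (ccomp C g f) = cdom C f"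
    using f g fg by auto
  have "res (plus C T H) (ccomp C g f) c = plus_class C T H (cdom C f) B"
    using char[OF H gf(1), of P B] gf P B r cP by simp
  then show "res (plus C T H) (ccomp C g f) c = res (plus C T H) f (res (plus C T H) g c)"
    using e1 e2 by simp
qed

definition eta where "eta Y x = ({cid C Y}, restrict (\<lambda>_. x) {cid C Y})"

lemma eta_reps:
  assumes Y: "Y \<in> cobj C" and x: "x \<in> sec H Y"
  shows "eta Y x \<in> plus_reps C T H Y"
  unfolding reps_iff eta_def fst_conv snd_conv compat_def
proof (intro conjI ballI allI impI)
  show "{cid C Y} \<in> T Y" using cov_id[OF Y] .
next
  show "restrict (\<lambda>_. x) {cid C Y} \<in> extensional {cid C Y}" by simp
next
  fix u assume "u \<in> {cid C Y}" then show "restrict (\<lambda>_. x) {cid C Y} u \<in> sec H (cdom C u)" using x Y by simp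
next
  fix u1 u2 a b assume u: "u1 \<in> {cid C Y}" "u2 \<in> {cid C Y}"
    and ab: "a \<in> carr C \<and> b \<in> carr C \<and> cdom C a = cdom C b \<and> ccod C a = cdom C u1 \<and>
             ccod C b = cdom C u2 \<and> ccomp C u1 a = ccomp C u2 b"
  from ab have ac: "a \<in> carr C" "b \<in> carr C" "ccod C a = cdom C u1" "ccod C b = cdom C u2"
      "ccomp C u1 a = ccomp C u2 b" by blast+
  have uu: "u1 = cid C Y" "u2 = cid C Y" using u by simp_all
  have cd: "ccod C a = Y" "ccod C b = Y" using ac(3,4) uu Y by simp_all
  have "a = ccomp C u1 a" using id_left[OF ac(1) cd(1)] uu by simp
  also have "\<dots> = ccomp C u2 b" by (rule ac(5))
  also have "\<dots> = b" using id_left[OF ac(2) cd(2)] uu by simp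
  finally have "a = b" .
  then show "res H a (restrict (\<lambda>_. x) {cid C Y} u1) = res H b (restrict (\<lambda>_. x) {cid C Y} u2)" using u by simp
qed

lemma G3:
  assumes H: "is_presheaf C H" and P: "P \<in> plus_reps C T H X" and v: "v \<in> fst P"
    and h: "h \<in> carr C" "ccod C h = cdom C v"
  shows "res (plus C T H) (ccomp C v h) (plus_class C T H X P)
         = plus_class C T H (cdom C h) (eta (cdom C h) (res H h (snd P v)))"
proof -
  have F: "fst P \<in> T X" using P unfolding reps_iff by blast
  have vc: "v \<in> carr C" "ccod C v = X" using cov_arr[OF F v] cov_cod[OF F v] by auto
  let ?Y = "cdom C h"
  have Y: "?Y \<in> cobj C" using dom_obj h by blast
  have x: "res H h (snd P v) \<in> sec H ?Y"
    using ps_sec[OF H h(1)] good_sec[OF reps_good[OF P] v] h by simp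
  have vh: "ccomp C v h \<in> carr C" "ccod C (ccomp C v h) = X" "cdom C (ccomp C v h) = ?Y"
    using vc h by auto
  have E: "eta ?Y (res H h (snd P v)) \<in> plus_reps C T H ?Y" using eta_reps[OF Y x] .
  have "D H (ccomp C v h) P (cid C ?Y) (eta ?Y (res H h (snd P v)))"
    unfolding D_def eta_def fst_conv snd_conv
    apply (rule bexI[OF _ v], rule bexI[of _ "cid C ?Y"])
    apply (rule exI[of _ h], rule exI[of _ "cid C ?Y"])
    using h Y ps_id[OF H Y x] by auto
  then have "Rl H ?Y (ccomp C v h) P (cid C ?Y) (eta ?Y (res H h (snd P v)))"
    unfolding Rl_def apply - apply (rule bexI[OF _ cov_id[OF Y]]) using vh Y by simp
  then show ?thesis using char[OF H vh(1), of P] vh P E by simp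
qed

lemma eta_inj:
  assumes H: "is_presheaf C H" and Y: "Y \<in> cobj C" and x: "x \<in> sec H Y" and y: "y \<in> sec H Y"
    and e: "plus_class C T H Y (eta Y x) = plus_class C T H Y (eta Y y)"
  shows "\<exists>W\<in>T Y. \<forall>w\<in>W. res H w x = res H w y"
proof -
  have "plus_rel C T H Y (eta Y x) (eta Y y)"
    using e cls_eq[OF H eta_reps[OF Y x] eta_reps[OF Y y]] by simp
  then obtain W where W: "W \<in> T Y" and d: "\<And>w. w \<in> W \<Longrightarrow> D H w (eta Y x) w (eta Y y)"
    unfolding rel_D by blast
  have "\<forall>w\<in>W. res H w x = res H w y"
  proof
    fix w assume w: "w \<in> W"
    obtain a b where ab: "a \<in> carr C" "b \<in> carr C" "ccod C a = Y" "ccod C b = Y"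
      "ccomp C (cid C Y) a = w" "ccomp C (cid C Y) b = w" "res H a x = res H b y"
      using d[OF w] Y unfolding D_def eta_def by auto
    then show "res H w x = res H w y" by simp
  qed
  then show ?thesis using W by blast
qed

lemma eta_nat:
  assumes H: "is_presheaf C H" and Y: "Y \<in> cobj C" and x: "x \<in> sec H Y"
    and g: "g \<in> carr C" "ccod C g = Y"
  shows "res (plus C T H) g (plus_class C T H Y (eta Y x)) = plus_class C T H (cdom C g) (eta (cdom C g) (res H g x))"
proof -
  have "cid C Y \<in> fst (eta Y x)" unfolding eta_def by simp
  from G3[OF H eta_reps[OF Y x] this g(1)] g Y
  show ?thesis unfolding eta_def by simp
qed

lemma eta_sec: "Y \<in> cobj C \<Longrightarrow> x \<in> sec H Y \<Longrightarrow> plus_class C T H Y (eta Y x) \<in> sec (plus C T H) Y"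
  unfolding sec_plus by (rule imageI[OF eta_reps])

definition LE where "LE H Y x y \<longleftrightarrow> (\<exists>Z\<in>T Y. \<forall>z\<in>Z. res H z x = res H z y)"

lemma LE_local:
  assumes H: "is_presheaf C H" and Z: "Z \<in> T Y" and x: "x \<in> sec H Y" and y: "y \<in> sec H Y"
    and loc: "\<And>z. z \<in> Z \<Longrightarrow> LE H (cdom C z) (res H z x) (res H z y)"
  shows "LE H Y x y"
proof -
  have "\<forall>z\<in>Z. \<exists>W\<in>T (cdom C z). \<forall>w\<in>W. res H w (res H z x) = res H w (res H z y)"
    using loc unfolding LE_def by blast
  then obtain V where V: "\<And>z. z \<in> Z \<Longrightarrow> V z \<in> T (cdom C z)"
    and dv: "\<And>z w. z \<in> Z \<Longrightarrow> w \<in> V z \<Longrightarrow> res H w (res H z x) = res H w (res H z y)"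
    by metis
  show ?thesis unfolding LE_def
  proof (rule bexI[OF _ cov_comp[OF Z V]], rule ballI)
    fix e assume "e \<in> comp_fam C Z V"
    then obtain z w where zw: "z \<in> Z" "w \<in> V z" "e = ccomp C z w" unfolding comp_fam_iff by blast
    have zc: "z \<in> carr C" "ccod C z = Y" using cov_arr[OF Z zw(1)] cov_cod[OF Z zw(1)] by auto
    have wc: "w \<in> carr C" "ccod C w = cdom C z" using cov_arr[OF V zw(2)] cov_cod[OF V zw(2)] zw by auto
    show "res H e x = res H e y"
      using dv[OF zw(1,2)] ps_comp[OF H wc(1) zc(1) wc(2)] zc wc x y zw(3) by simp
  qed
qed

lemma LE_eq:
  assumes H: "is_presheaf C H" and c1: "c1 \<in> sec (plus C T H) X" and c2: "c2 \<in> sec (plus C T H) X"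
    and le: "LE (plus C T H) X c1 c2"
  shows "c1 = c2"
proof -
  obtain Z where Z: "Z \<in> T X" and eq: "\<And>z. z \<in> Z \<Longrightarrow> res (plus C T H) z c1 = res (plus C T H) z c2"
    using le unfolding LE_def by blast
  obtain P where P: "P \<in> plus_reps C T H X" and cP: "c1 = plus_class C T H X P"
    using c1 unfolding sec_plus by blast
  obtain Q where Q: "Q \<in> plus_reps C T H X" and cQ: "c2 = plus_class C T H X Q"
    using c2 unfolding sec_plus by blast
  have X: "X \<in> cobj C" using reps_obj[OF P] .
  have "Rl H X (cid C X) P (cid C X) Q"
  proof (rule Rl_local[OF Z])
    fix z assume z: "z \<in> Z"
    have zc: "z \<in> carr C" "ccod C z = X" using cov_arr[OF Z z] cov_cod[OF Z z] by auto
    let ?Y = "cdom C z"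
    have Yo: "?Y \<in> cobj C" using dom_obj zc by blast
    define A where "A = pull_rep C H z P"
    define B where "B = pull_rep C H z Q"
    have P': "P \<in> plus_reps C T H (ccod C z)" and Q': "Q \<in> plus_reps C T H (ccod C z)" using P Q zc by auto
    have A: "A \<in> plus_reps C T H ?Y" and rA: "Rl H ?Y z P (cid C ?Y) A"
      using pull[OF H P' zc(1)] unfolding A_def by auto
    have B: "B \<in> plus_reps C T H ?Y" and rB: "Rl H ?Y z Q (cid C ?Y) B"
      using pull[OF H Q' zc(1)] unfolding B_def by auto
    have "plus_class C T H ?Y A = plus_class C T H ?Y B"
      using eq[OF z] res_cls[OF H zc(1) P'] res_cls[OF H zc(1) Q'] cP cQ zc unfolding A_def B_def by simp
    then have "Rl H ?Y (cid C ?Y) A (cid C ?Y) B" using cls_eq[OF H A B] unfolding rel_Rl by simp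
    have gs: "good H P" "good H Q" "good H A" "good H B"
      using reps_good[OF P] reps_good[OF Q] reps_good[OF A] reps_good[OF B] by auto
    have "Rl H ?Y z P (cid C ?Y) B"
      using Rl_trans[OF H gs(1,3,4) _ _ _ _ _ _ rA \<open>Rl H ?Y (cid C ?Y) A (cid C ?Y) B\<close>] zc Yo by simp
    then have "Rl H ?Y z P z Q"
      using Rl_trans[OF H gs(1,4,2) _ _ _ _ _ _ _ Rl_sym[OF rB]] zc Yo by simp
    then show "Rl H (cdom C z) (ccomp C (cid C X) z) P (ccomp C (cid C X) z) Q" using zc by simp
  qed (use X in auto)
  then have "plus_rel C T H X P Q" unfolding rel_Rl .
  then show ?thesis using cls_eq[OF H P Q] cP cQ by simp
qed

end

locale mctx = s: ct C \<sigma> + r: ct C \<rho> for C :: "('o,'m) cat" and \<sigma> \<rho> +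
  fixes F :: "('o,'m,'v) presheaf"
  assumes HF: "is_presheaf C F"
    and hyp: "\<forall>X U V. U \<in> \<rho> X \<and> (\<forall>u\<in>U. V u \<in> \<sigma> (cdom C u)) \<longrightarrow>
           (\<exists>U' V'. U' \<in> \<sigma> X \<and> (\<forall>k\<in>U'. V' k \<in> \<rho> (cdom C k)) \<and>
                    refines C (comp_fam C U' V') (comp_fam C U V))"
    and sepF: "separated C \<rho> F"
begin

abbreviation "F1 \<equiv> plus C \<sigma> F"
abbreviation "F2 \<equiv> plus C \<sigma> F1"

lemma H1: "is_presheaf C F1" by (rule s.plus_presheaf[OF HF])
lemma H2: "is_presheaf C F2" by (rule s.plus_presheaf[OF H1])

definition e1 where "e1 Y x = plus_class C \<sigma> F Y (s.eta Y x)"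
definition e2 where "e2 Y x = plus_class C \<sigma> F1 Y (s.eta Y (e1 Y x))"

lemma e1_sec: "Y \<in> cobj C \<Longrightarrow> x \<in> sec F Y \<Longrightarrow> e1 Y x \<in> sec F1 Y"
  unfolding e1_def by (rule s.eta_sec)
lemma e2_sec: "Y \<in> cobj C \<Longrightarrow> x \<in> sec F Y \<Longrightarrow> e2 Y x \<in> sec F2 Y"
  unfolding e2_def by (rule s.eta_sec[OF _ e1_sec])

lemma e2_nat:
  assumes Y: "Y \<in> cobj C" and x: "x \<in> sec F Y" and g: "g \<in> carr C" "ccod C g = Y"
  shows "res F2 g (e2 Y x) = e2 (cdom C g) (res F g x)"
proof -
  have "res F2 g (e2 Y x) = plus_class C \<sigma> F1 (cdom C g) (s.eta (cdom C g) (res F1 g (e1 Y x)))"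
    unfolding e2_def by (rule s.eta_nat[OF H1 Y e1_sec[OF Y x] g])
  also have "res F1 g (e1 Y x) = e1 (cdom C g) (res F g x)"
    unfolding e1_def by (rule s.eta_nat[OF HF Y x g])
  finally show ?thesis unfolding e2_def .
qed

lemma e2_inj:
  assumes Y: "Y \<in> cobj C" and x: "x \<in> sec F Y" and y: "y \<in> sec F Y" and e: "e2 Y x = e2 Y y"
  shows "s.LE F Y x y"
proof -
  obtain W where W: "W \<in> \<sigma> Y" and wq: "\<And>w. w \<in> W \<Longrightarrow> res F1 w (e1 Y x) = res F1 w (e1 Y y)"
    using s.eta_inj[OF H1 Y e1_sec[OF Y x] e1_sec[OF Y y]] e unfolding e2_def by blast
  show ?thesis
  proof (rule s.LE_local[OF HF W x y])
    fix w assume w: "w \<in> W"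
    have wc: "w \<in> carr C" "ccod C w = Y" using s.cov_arr[OF W w] s.cov_cod[OF W w] by auto
    have Yw: "cdom C w \<in> cobj C" using s.dom_obj wc by blast
    have "e1 (cdom C w) (res F w x) = e1 (cdom C w) (res F w y)"
      using wq[OF w] unfolding e1_def s.eta_nat[OF HF Y x wc] s.eta_nat[OF HF Y y wc] .
    then show "s.LE F (cdom C w) (res F w x) (res F w y)"
      unfolding s.LE_def e1_def
      using s.eta_inj[OF HF Yw s.ps_sec[OF HF wc(1)] s.ps_sec[OF HF wc(1)]] x y wc by simp
  qed
qed

lemma stepB:
  assumes c: "c \<in> sec F2 X"
  shows "\<exists>A\<in>\<sigma> X. \<forall>e\<in>A. \<exists>x\<in>sec F (cdom C e). res F2 e c = e2 (cdom C e) x"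
proof -
  obtain Q where Q: "Q \<in> plus_reps C \<sigma> F1 X" and cQ: "c = plus_class C \<sigma> F1 X Q"
    using c unfolding s.sec_plus by blast
  have W: "fst Q \<in> \<sigma> X" and cs: "compat C F1 (fst Q) (snd Q)" using Q unfolding s.reps_iff by auto
  have "\<forall>w\<in>fst Q. \<exists>P. P \<in> plus_reps C \<sigma> F (cdom C w) \<and> snd Q w = plus_class C \<sigma> F (cdom C w) P"
  proof
    fix w assume w: "w \<in> fst Q"
    have "snd Q w \<in> sec F1 (cdom C w)" using cs w unfolding compat_def by blast
    then show "\<exists>P. P \<in> plus_reps C \<sigma> F (cdom C w) \<and> snd Q w = plus_class C \<sigma> F (cdom C w) P"
      unfolding s.sec_plus by blast
  qed
  then obtain PP where PP: "\<And>w. w \<in> fst Q \<Longrightarrow> PP w \<in> plus_reps C \<sigma> F (cdom C w)"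
    and sw: "\<And>w. w \<in> fst Q \<Longrightarrow> snd Q w = plus_class C \<sigma> F (cdom C w) (PP w)"
    by metis
  have V: "\<And>w. w \<in> fst Q \<Longrightarrow> fst (PP w) \<in> \<sigma> (cdom C w)" using PP unfolding s.reps_iff by blast
  show ?thesis
  proof (rule bexI[OF _ s.cov_comp[OF W V]], rule ballI)
    fix e assume "e \<in> comp_fam C (fst Q) (\<lambda>w. fst (PP w))"
    then obtain w v where wv: "w \<in> fst Q" "v \<in> fst (PP w)" "e = ccomp C w v"
      unfolding s.comp_fam_iff by blast
    have wc: "w \<in> carr C" "ccod C w = X" using s.cov_arr[OF W wv(1)] s.cov_cod[OF W wv(1)] by auto
    have vc: "v \<in> carr C" "ccod C v = cdom C w" using s.cov_arr[OF V wv(2)] s.cov_cod[OF V wv(2)] wv by auto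
    have Yv: "cdom C v \<in> cobj C" using s.dom_obj vc by blast
    have xs: "snd (PP w) v \<in> sec F (cdom C v)" using s.good_sec[OF s.reps_good[OF PP[OF wv(1)]] wv(2)] .
    have 1: "res F2 e c = plus_class C \<sigma> F1 (cdom C v) (s.eta (cdom C v) (res F1 v (snd Q w)))"
      unfolding cQ wv(3) by (rule s.G3[OF H1 Q wv(1) vc])
    have "res F1 (ccomp C v (cid C (cdom C v))) (plus_class C \<sigma> F (cdom C w) (PP w))
          = plus_class C \<sigma> F (cdom C (cid C (cdom C v))) (s.eta (cdom C (cid C (cdom C v)))
               (res F (cid C (cdom C v)) (snd (PP w) v)))"
      by (rule s.G3[OF HF PP[OF wv(1)] wv(2)]) (use Yv in simp_all)
    then have 2: "res F1 v (snd Q w) = e1 (cdom C v) (snd (PP w) v)"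
      using sw[OF wv(1)] vc Yv s.ps_id[OF HF Yv xs] unfolding e1_def by simp
    have "cdom C e = cdom C v" using wv(3) wc vc by simp
    then show "\<exists>x\<in>sec F (cdom C e). res F2 e c = e2 (cdom C e) x"
      using 1 2 xs unfolding e2_def by auto
  qed
qed

end

context mctx
begin

lemma SC:
  assumes U: "U \<in> \<rho> X" and c1: "c1 \<in> sec F2 X" and c2: "c2 \<in> sec F2 X"
    and eqU: "\<And>u. u \<in> U \<Longrightarrow> res F2 u c1 = res F2 u c2"
    and e: "e \<in> carr C" "ccod C e = X"
    and x: "x \<in> sec F (cdom C e)" and y: "y \<in> sec F (cdom C e)"
    and ex: "res F2 e c1 = e2 (cdom C e) x" and ey: "res F2 e c2 = e2 (cdom C e) y"
  shows "s.LE F (cdom C e) x y"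
proof -
  let ?Y = "cdom C e"
  have Yo: "?Y \<in> cobj C" using s.dom_obj e by blast
  obtain pb where pb: "\<forall>u\<in>U. is_pullback C u e (fst (pb u)) (snd (pb u))"
    and Ue: "(\<lambda>u. snd (pb u)) ` U \<in> \<rho> ?Y"
    using r.cov_pull[OF U e] by blast
  define Ue where "Ue = (\<lambda>u. snd (pb u)) ` U"
  have loc: "\<forall>g\<in>Ue. \<exists>Z\<in>\<sigma> (cdom C g). \<forall>z\<in>Z. res F z (res F g x) = res F z (res F g y)"
  proof
    fix g assume "g \<in> Ue"
    then obtain u where u: "u \<in> U" and gu: "g = snd (pb u)" unfolding Ue_def by blast
    note pf = s.pb_facts[OF pb[rule_format, OF u]]
    have uc: "u \<in> carr C" "ccod C u = X" using r.cov_arr[OF U u] r.cov_cod[OF U u] by auto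
    let ?p = "fst (pb u)"
    have gc: "g \<in> carr C" "ccod C g = ?Y" using pf gu by auto
    have Yg: "cdom C g \<in> cobj C" using s.dom_obj gc by blast
    have k: "\<And>c. c \<in> sec F2 X \<Longrightarrow> res F2 g (res F2 e c) = res F2 ?p (res F2 u c)"
    proof -
      fix c assume c: "c \<in> sec F2 X"
      have "res F2 g (res F2 e c) = res F2 (ccomp C e g) c"
        using s.ps_comp[OF H2 gc(1) e(1) gc(2)] c e by simp
      also have "ccomp C e g = ccomp C u ?p" using pf gu by simp
      also have "res F2 (ccomp C u ?p) c = res F2 ?p (res F2 u c)"
        using s.ps_comp[OF H2 pf(1) uc(1) pf(3)] c uc by simp
      finally show "res F2 g (res F2 e c) = res F2 ?p (res F2 u c)" .
    qed
    have "res F2 g (res F2 e c1) = res F2 g (res F2 e c2)" using k[OF c1] k[OF c2] eqU[OF u] by simp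
    then have "e2 (cdom C g) (res F g x) = e2 (cdom C g) (res F g y)"
      using ex ey e2_nat[OF Yo x gc] e2_nat[OF Yo y gc] by simp
    then have "s.LE F (cdom C g) (res F g x) (res F g y)"
      using e2_inj[OF Yg s.ps_sec[OF HF gc(1)] s.ps_sec[OF HF gc(1)]] x y gc by simp
    then show "\<exists>Z\<in>\<sigma> (cdom C g). \<forall>z\<in>Z. res F z (res F g x) = res F z (res F g y)"
      unfolding s.LE_def .
  qed
  then obtain V where V: "\<And>g. g \<in> Ue \<Longrightarrow> V g \<in> \<sigma> (cdom C g)"
    and Vq: "\<And>g z. g \<in> Ue \<Longrightarrow> z \<in> V g \<Longrightarrow> res F z (res F g x) = res F z (res F g y)"
    by metis
  have UeR: "Ue \<in> \<rho> ?Y" using Ue unfolding Ue_def .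
  obtain U' V' where U': "U' \<in> \<sigma> ?Y" and V': "\<forall>k\<in>U'. V' k \<in> \<rho> (cdom C k)"
    and rf: "refines C (comp_fam C U' V') (comp_fam C Ue V)"
    using hyp UeR V by blast
  show ?thesis unfolding s.LE_def
  proof (rule bexI[OF _ U'], rule ballI)
    fix k assume k: "k \<in> U'"
    have kc: "k \<in> carr C" "ccod C k = ?Y" using s.cov_arr[OF U' k] s.cov_cod[OF U' k] by auto
    have Vk: "V' k \<in> \<rho> (cdom C k)" using V' k by blast
    have inj: "inj_on (\<lambda>t. \<lambda>l\<in>V' k. res F l t) (sec F (cdom C k))"
      using sepF Vk unfolding separated_def by blast
    have xk: "res F k x \<in> sec F (cdom C k)" and yk: "res F k y \<in> sec F (cdom C k)"
      using s.ps_sec[OF HF kc(1)] x y kc by auto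
    have "(\<lambda>l\<in>V' k. res F l (res F k x)) = (\<lambda>l\<in>V' k. res F l (res F k y))"
    proof (rule restrict_ext)
      fix l assume l: "l \<in> V' k"
      have lc: "l \<in> carr C" "ccod C l = cdom C k" using r.cov_arr[OF Vk l] r.cov_cod[OF Vk l] by auto
      have "ccomp C k l \<in> comp_fam C U' V'" unfolding s.comp_fam_iff using k l by blast
      then obtain m h where m: "m \<in> comp_fam C Ue V" and h: "h \<in> carr C" "ccod C h = cdom C m"
        and kl: "ccomp C k l = ccomp C m h"
        using rf unfolding refines_def by blast
      obtain g z where gz: "g \<in> Ue" "z \<in> V g" "m = ccomp C g z" using m unfolding s.comp_fam_iff by blast
      have gc: "g \<in> carr C" "ccod C g = ?Y" using r.cov_arr[OF UeR gz(1)] r.cov_cod[OF UeR gz(1)] by auto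
      have zc: "z \<in> carr C" "ccod C z = cdom C g" using s.cov_arr[OF V gz(2)] s.cov_cod[OF V gz(2)] gz by auto
      have mc: "m \<in> carr C" "ccod C m = ?Y" "cdom C m = cdom C z" using gz gc zc by auto
      have eq: "\<And>w. w \<in> sec F ?Y \<Longrightarrow> res F l (res F k w) = res F h (res F z (res F g w))"
      proof -
        fix w assume w: "w \<in> sec F ?Y"
        have "res F l (res F k w) = res F (ccomp C k l) w"
          using s.ps_comp[OF HF lc(1) kc(1) lc(2)] w kc by simp
        also have "\<dots> = res F (ccomp C m h) w" using kl by simp
        also have "\<dots> = res F h (res F m w)" using s.ps_comp[OF HF h(1) mc(1) h(2)] w mc by simp
        also have "res F m w = res F z (res F g w)"
          using s.ps_comp[OF HF zc(1) gc(1) zc(2)] w gc gz(3) by simp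
        finally show "res F l (res F k w) = res F h (res F z (res F g w))" .
      qed
      show "res F l (res F k x) = res F l (res F k y)" using eq[OF x] eq[OF y] Vq[OF gz(1,2)] by simp
    qed
    then show "res F k x = res F k y" using inj_onD[OF inj _ xk yk] by blast
  qed
qed

lemma main_sep: "separated C \<rho> F2"
  unfolding separated_def
proof (intro allI ballI inj_onI)
  fix X U c1 c2 assume U: "U \<in> \<rho> X" and c1: "c1 \<in> sec F2 X" and c2: "c2 \<in> sec F2 X"
    and feq: "(\<lambda>u\<in>U. res F2 u c1) = (\<lambda>u\<in>U. res F2 u c2)"
  have eqU: "\<And>u. u \<in> U \<Longrightarrow> res F2 u c1 = res F2 u c2"
  proof -
    fix u assume u: "u \<in> U"
    from fun_cong[OF feq, of u] u show "res F2 u c1 = res F2 u c2" by simp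
  qed
  obtain A1 where A1: "A1 \<in> \<sigma> X" and a1x: "\<And>e. e \<in> A1 \<Longrightarrow> \<exists>x\<in>sec F (cdom C e). res F2 e c1 = e2 (cdom C e) x"
    using stepB[OF c1] by blast
  obtain A2 where A2: "A2 \<in> \<sigma> X" and a2x: "\<And>e. e \<in> A2 \<Longrightarrow> \<exists>x\<in>sec F (cdom C e). res F2 e c2 = e2 (cdom C e) x"
    using stepB[OF c2] by blast
  have "s.LE F2 X c1 c2"
  proof (rule s.LE_local[OF H2 A1 c1 c2])
    fix a1 assume a1: "a1 \<in> A1"
    have a1c: "a1 \<in> carr C" "ccod C a1 = X" using s.cov_arr[OF A1 a1] s.cov_cod[OF A1 a1] by auto
    obtain x1 where x1: "x1 \<in> sec F (cdom C a1)" and ex1: "res F2 a1 c1 = e2 (cdom C a1) x1"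
      using a1x[OF a1] by blast
    have Y1: "cdom C a1 \<in> cobj C" using s.dom_obj a1c by blast
    obtain pb where pb: "\<forall>a\<in>A2. is_pullback C a a1 (fst (pb a)) (snd (pb a))"
      and Z: "(\<lambda>a. snd (pb a)) ` A2 \<in> \<sigma> (cdom C a1)"
      using s.cov_pull[OF A2 a1c] by blast
    show "s.LE F2 (cdom C a1) (res F2 a1 c1) (res F2 a1 c2)"
    proof (rule s.LE_local[OF H2 Z])
      show "res F2 a1 c1 \<in> sec F2 (cdom C a1)" "res F2 a1 c2 \<in> sec F2 (cdom C a1)"
        using s.ps_sec[OF H2 a1c(1)] c1 c2 a1c by auto
    next
      fix g assume "g \<in> (\<lambda>a. snd (pb a)) ` A2"
      then obtain a2 where a2: "a2 \<in> A2" and ga: "g = snd (pb a2)" by blast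
      note pf = s.pb_facts[OF pb[rule_format, OF a2]]
      let ?p = "fst (pb a2)"
      have a2c: "a2 \<in> carr C" "ccod C a2 = X" using s.cov_arr[OF A2 a2] s.cov_cod[OF A2 a2] by auto
      obtain x2 where x2: "x2 \<in> sec F (cdom C a2)" and ex2: "res F2 a2 c2 = e2 (cdom C a2) x2"
        using a2x[OF a2] by blast
      have Y2: "cdom C a2 \<in> cobj C" using s.dom_obj a2c by blast
      have gc: "g \<in> carr C" "ccod C g = cdom C a1" using pf ga by auto
      have pc: "?p \<in> carr C" "ccod C ?p = cdom C a2" "cdom C ?p = cdom C g" using pf ga by auto
      define e where "e = ccomp C a1 g"
      have ec: "e \<in> carr C" "ccod C e = X" "cdom C e = cdom C g" unfolding e_def using gc a1c by auto
      have r1: "res F2 g (res F2 a1 c1) = res F2 e c1"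
        unfolding e_def using s.ps_comp[OF H2 gc(1) a1c(1) gc(2)] c1 a1c by simp
      have r2: "res F2 g (res F2 a1 c2) = res F2 e c2"
        unfolding e_def using s.ps_comp[OF H2 gc(1) a1c(1) gc(2)] c2 a1c by simp
      have "e = ccomp C a2 ?p" unfolding e_def using pf ga by simp
      then have r2': "res F2 e c2 = res F2 ?p (res F2 a2 c2)"
        using s.ps_comp[OF H2 pc(1) a2c(1) pc(2)] c2 a2c by simp
      define x where "x = res F g x1"
      define y where "y = res F ?p x2"
      have xs: "x \<in> sec F (cdom C e)" unfolding x_def using s.ps_sec[OF HF gc(1)] x1 gc ec by simp
      have ys: "y \<in> sec F (cdom C e)" unfolding y_def using s.ps_sec[OF HF pc(1)] x2 pc ec by simp
      have exx: "res F2 e c1 = e2 (cdom C e) x"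
        using r1 ex1 e2_nat[OF Y1 x1 gc] ec unfolding x_def by simp
      have eyy: "res F2 e c2 = e2 (cdom C e) y"
        using r2' ex2 e2_nat[OF Y2 x2 pc(1,2)] ec pc unfolding y_def by simp
      have le: "s.LE F (cdom C e) x y" by (rule SC[OF U c1 c2 eqU ec(1,2) xs ys exx eyy])
      have Ye: "cdom C e \<in> cobj C" using s.dom_obj ec by blast
      obtain W where W: "W \<in> \<sigma> (cdom C e)" and wq: "\<And>w. w \<in> W \<Longrightarrow> res F w x = res F w y"
        using le unfolding s.LE_def by blast
      have "s.LE F2 (cdom C e) (e2 (cdom C e) x) (e2 (cdom C e) y)" unfolding s.LE_def
      proof (rule bexI[OF _ W], rule ballI)
        fix w assume w: "w \<in> W"
        have wc: "w \<in> carr C" "ccod C w = cdom C e" using s.cov_arr[OF W w] s.cov_cod[OF W w] by auto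
        show "res F2 w (e2 (cdom C e) x) = res F2 w (e2 (cdom C e) y)"
          using e2_nat[OF Ye xs wc] e2_nat[OF Ye ys wc] wq[OF w] by simp
      qed
      then show "s.LE F2 (cdom C g) (res F2 g (res F2 a1 c1)) (res F2 g (res F2 a1 c2))"
        using r1 r2 exx eyy ec by simp
    qed
  qed
  then show "c1 = c2" by (rule s.LE_eq[OF H1 c1 c2])
qed

end

theorem mainTheorem4:
  fixes C :: "('o,'m) cat" and \<sigma> \<rho> :: "'o \<Rightarrow> 'm set set"
    and F :: "('o,'m,'v) presheaf" and G :: "'o \<Rightarrow> 'v monoid"
  assumes "category C" and "gtop C \<sigma>" and "gtop C \<rho>"
    and "\<forall>X U V. U \<in> \<rho> X \<and> (\<forall>u\<in>U. V u \<in> \<sigma> (cdom C u)) \<longrightarrow>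
           (\<exists>U' V'. U' \<in> \<sigma> X \<and> (\<forall>k\<in>U'. V' k \<in> \<rho> (cdom C k)) \<and>
                    refines C (comp_fam C U' V') (comp_fam C U V))"
    and "is_ab_presheaf C F G"
    and "separated C \<rho> F"
  shows "separated C \<rho> (sheafify C \<sigma> F)"
proof -
  have HF: "is_presheaf C F" using assms(5) unfolding is_ab_presheaf_def by blast
  interpret m: mctx C \<sigma> \<rho> F
    by (unfold_locales) (fact assms(1) assms(2) assms(3) HF assms(4) assms(6))+
  show ?thesis unfolding sheafify_def by (rule m.main_sep)
qed

end
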